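(* Let $X_1,\dots,X_n$ be completely regular continua, let $f_i:X_i\to X_i$ be continuous for $1\le i\le n$, and let $f:X_1\times\dots\times X_n\to X_1\times\dots\times X_n$ be defined by $f(x_1,\dots,x_n)=(f_1(x_1),\dots,f_n(x_n))$. Then every totally periodic $\omega$-limit set of $f$ is finite.
   Context: A continuum is a compact connected metric space; it is completely regular if every subcontinuum with more than one point has non-empty interior. For a continuous map $g$ of a compact metric space $Y$ and $y\in Y$, $\omega_g(y)=\{z:\ \exists\, n_i\to+\infty,\ g^{n_i}(y)\to z\}$; it is totally periodic if each of its points $z$ satisfies $g^m(z)=z$ for some $m\ge1$. *)

theory Defs
  imports "HOL-Analysis.Analysis"
begin

definition continuum :: "'a::metric_space set \<Rightarrow> bool" where
  "continuum X \<longleftrightarrow> X \<noteq> {} \<and> compact X \<and> connected X"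

definition completely_regular_continuum :: "'a::metric_space set \<Rightarrow> bool" where
  "completely_regular_continuum X \<longleftrightarrow> continuum X \<and>
     (\<forall>C. C \<subseteq> X \<and> continuum C \<and> (\<exists>a b. a \<in> C \<and> b \<in> C \<and> a \<noteq> b)
          \<longrightarrow> (top_of_set X) interior_of C \<noteq> {})"

definition omega_limit :: "'a topology \<Rightarrow> ('a \<Rightarrow> 'a) \<Rightarrow> 'a \<Rightarrow> 'a set" where
  "omega_limit T g y = {z. \<exists>r::nat \<Rightarrow> nat. filterlim r at_top sequentially \<and>
                              limitin T (\<lambda>k. (g ^^ r k) y) z sequentially}"

definition totally_periodic :: "('a \<Rightarrow> 'a) \<Rightarrow> 'a set \<Rightarrow> bool" where
  "totally_periodic g S \<longleftrightarrow> (\<forall>z\<in>S. \<exists>m\<ge>1. (g ^^ m) z = z)"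

definition prod_map :: "nat \<Rightarrow> (nat \<Rightarrow> 'a \<Rightarrow> 'a) \<Rightarrow> (nat \<Rightarrow> 'a) \<Rightarrow> (nat \<Rightarrow> 'a)" where
  "prod_map n f x = (\<lambda>i\<in>{..<n}. f i (x i))"

end

theory Submission
  imports Defs
begin

locale omdyn =
  fixes T :: "'b topology" and F :: "'b \<Rightarrow> 'b" and y :: 'b
  assumes cont: "continuous_map T T F" and cpt: "compact_space T"
    and haus: "Hausdorff_space T" and yin: "y \<in> topspace T"
    and freq: "\<And>z. z \<in> topspace T \<Longrightarrow> (\<And>U N. openin T U \<Longrightarrow> z \<in> U \<Longrightarrow> \<exists>k\<ge>N. (F^^k) y \<in> U)
                 \<Longrightarrow> z \<in> omega_limit T F y"
begin

abbreviation "Om \<equiv> omega_limit T F y"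

lemma cont_pow: "continuous_map T T (F^^k)"
proof (induction k)
  case (Suc k)
  have "continuous_map T T (F \<circ> (F^^k))" by (rule continuous_map_compose[OF Suc cont])
  then show ?case by (simp add: o_def)
qed simp

lemma orbit_in: "(F^^k) y \<in> topspace T"
  using cont_pow yin continuous_map_image_subset_topspace by blast

lemma Om_sub: "Om \<subseteq> topspace T"
  unfolding omega_limit_def using limitin_topspace by fastforce

lemma Om_freq:
  assumes "z \<in> Om" "openin T U" "z \<in> U"
  shows "\<exists>k\<ge>N. (F^^k) y \<in> U"
proof -
  obtain r where r: "filterlim r at_top sequentially" "limitin T (\<lambda>k. (F ^^ r k) y) z sequentially"
    using assms(1) unfolding omega_limit_def by blast
  have "eventually (\<lambda>k. (F ^^ r k) y \<in> U) sequentially"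
    using r(2) assms unfolding limitin_def by blast
  moreover have "eventually (\<lambda>k. N \<le> r k) sequentially"
    using r(1) filterlim_at_top by blast
  ultimately have "eventually (\<lambda>k. (F ^^ r k) y \<in> U \<and> N \<le> r k) sequentially"
    by (rule eventually_conj)
  then obtain M where "\<And>k. k \<ge> M \<Longrightarrow> (F ^^ r k) y \<in> U \<and> N \<le> r k"
    unfolding eventually_sequentially by blast
  then show ?thesis by blast
qed

lemma not_Om:
  assumes "z \<in> topspace T" "z \<notin> Om"
  obtains U N where "openin T U" "z \<in> U" "\<And>k. k \<ge> N \<Longrightarrow> (F^^k) y \<notin> U"
  using freq[OF assms(1)] assms(2) by (meson not_le)

lemma Om_closed: "closedin T Om"
  unfolding closedin_def
proof
  show "Om \<subseteq> topspace T" by (rule Om_sub)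
  show "openin T (topspace T - Om)"
  proof (subst openin_subopen, intro ballI)
    fix x assume x: "x \<in> topspace T - Om"
    then obtain U N where U: "openin T U" "x \<in> U" "\<And>k. k \<ge> N \<Longrightarrow> (F^^k) y \<notin> U"
      using not_Om by blast
    have "U \<subseteq> topspace T - Om"
    proof
      fix w assume "w \<in> U"
      then have "w \<in> topspace T" using U(1) openin_subset by blast
      moreover have "w \<notin> Om" using Om_freq[of w U N] U \<open>w \<in> U\<close> by blast
      ultimately show "w \<in> topspace T - Om" by blast
    qed
    then show "\<exists>T'. openin T T' \<and> x \<in> T' \<and> T' \<subseteq> topspace T - Om" using U by blast
  qed
qed

lemma Om_compact: "compactin T Om"
  using Om_closed cpt closedin_compact_space by blast

lemma Om_inv: assumes "z \<in> Om" shows "F z \<in> Om"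
proof -
  obtain r where r: "filterlim r at_top sequentially" "limitin T (\<lambda>k. (F ^^ r k) y) z sequentially"
    using assms(1) unfolding omega_limit_def by blast
  have "limitin T (F \<circ> (\<lambda>k. (F ^^ r k) y)) (F z) sequentially"
    by (rule continuous_map_limit[OF cont r(2)])
  moreover have "F \<circ> (\<lambda>k. (F ^^ r k) y) = (\<lambda>k. (F ^^ (Suc (r k))) y)"
    by auto
  moreover have "filterlim (\<lambda>k. Suc (r k)) at_top sequentially"
    using r(1) unfolding filterlim_at_top
    by (metis (mono_tags, lifting) eventually_mono le_SucI)
  ultimately show ?thesis unfolding omega_limit_def by auto
qed

lemma Om_inv_pow: "z \<in> Om \<Longrightarrow> (F^^k) z \<in> Om"
  by (induction k) (auto intro: Om_inv)

lemma cluster: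
  assumes K: "closedin T K" and inf: "\<And>N. \<exists>k\<ge>N. (F^^k) y \<in> K"
  shows "K \<inter> Om \<noteq> {}"
proof
  assume dis: "K \<inter> Om = {}"
  have "\<forall>z\<in>K. \<exists>U N. openin T U \<and> z \<in> U \<and> (\<forall>k\<ge>N. (F^^k) y \<notin> U)"
  proof
    fix z assume "z \<in> K"
    then have "z \<in> topspace T" "z \<notin> Om" using dis K closedin_subset by blast+
    then show "\<exists>U N. openin T U \<and> z \<in> U \<and> (\<forall>k\<ge>N. (F^^k) y \<notin> U)"
      using not_Om by metis
  qed
  then obtain Uf Nf where UN: "\<And>z. z \<in> K \<Longrightarrow> openin T (Uf z) \<and> z \<in> Uf z \<and> (\<forall>k\<ge>Nf z. (F^^k) y \<notin> Uf z)"
    by metis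
  have "compactin T K" using K cpt closedin_compact_space by blast
  then obtain G where G: "finite G" "G \<subseteq> Uf ` K" "K \<subseteq> \<Union>G"
    unfolding compactin_def using UN
    by (smt (verit, best) UN_I image_iff subsetI)
  then obtain K' where K': "K' \<subseteq> K" "finite K'" "G = Uf ` K'"
    by (meson finite_subset_image)
  define N where "N = (\<Sum>z\<in>K'. Nf z)"
  obtain k where k: "k \<ge> N" "(F^^k) y \<in> K" using inf by blast
  then obtain z where z: "z \<in> K'" "(F^^k) y \<in> Uf z" using G K' by auto
  have "Nf z \<le> N" unfolding N_def using K'(2) z(1) by (simp add: member_le_sum)
  then show False using UN[of z] z K'(1) k by auto
qed

lemma nosplit:
  assumes A: "closedin T A" and B: "closedin T B" and AB: "A \<union> B = Om" "A \<inter> B = {}"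
    and a: "a \<in> A" and b: "b \<in> B" and FA: "F ` A \<subseteq> A" and FB: "F ` B \<subseteq> B"
  shows False
proof -
  have "compactin T A" "compactin T B" using A B cpt closedin_compact_space by blast+
  moreover have "disjnt A B" using AB by (simp add: disjnt_def)
  ultimately obtain U V where UV: "openin T U" "openin T V" "A \<subseteq> U" "B \<subseteq> V" "disjnt U V"
    using haus Hausdorff_space_compact_sets by metis
  define U' where "U' = {x \<in> topspace T. F x \<in> U} \<inter> U"
  define V' where "V' = {x \<in> topspace T. F x \<in> V} \<inter> V"
  have oU': "openin T U'" unfolding U'_def
    using openin_continuous_map_preimage[OF cont UV(1)] UV(1) by blast
  have oV': "openin T V'" unfolding V'_def
    using openin_continuous_map_preimage[OF cont UV(2)] UV(2) by blast
  have AU': "A \<subseteq> U'" unfolding U'_def using FA UV(3) A closedin_subset by fastforce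
  have BV': "B \<subseteq> V'" unfolding V'_def using FB UV(4) B closedin_subset by fastforce
  define K where "K = topspace T - (U' \<union> V')"
  have Kc: "closedin T K" unfolding K_def using oU' oV' by blast
  have "K \<inter> Om = {}" unfolding K_def using AB AU' BV' by blast
  then obtain N where N: "\<And>k. k \<ge> N \<Longrightarrow> (F^^k) y \<notin> K"
    using cluster[OF Kc] by blast
  have inUV: "k \<ge> N \<Longrightarrow> (F^^k) y \<in> U' \<union> V'" for k
    using N[of k] orbit_in[of k] unfolding K_def by blast
  have "a \<in> Om" using a AB by blast
  then obtain k1 where k1: "k1 \<ge> N" "(F^^k1) y \<in> U'"
    using Om_freq[OF _ oU'] a AU' by blast
  have stay: "(F^^(k1+j)) y \<in> U'" for j
  proof (induction j)
    case 0 then show ?case using k1 by simp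
  next
    case (Suc j)
    have "(F^^(k1 + Suc j)) y = F ((F^^(k1+j)) y)" by simp
    then have "(F^^(k1 + Suc j)) y \<in> U" using Suc unfolding U'_def by auto
    moreover have "(F^^(k1 + Suc j)) y \<in> U' \<union> V'" using inUV[of "k1 + Suc j"] k1(1) by linarith
    moreover have "V' \<inter> U = {}" using UV(5) unfolding V'_def disjnt_def by blast
    ultimately show ?case by blast
  qed
  have "b \<in> Om" using b AB by blast
  then obtain k2 where k2: "k2 \<ge> k1" "(F^^k2) y \<in> V"
    using Om_freq[OF _ UV(2)] b UV(4) by blast
  have "(F^^k2) y \<in> U'" using stay[of "k2 - k1"] k2(1) by simp
  then show False using k2 UV(5) unfolding U'_def disjnt_def by blast
qed

lemma periodic_mult: "(F^^p) z = z \<Longrightarrow> (F^^(p*q)) z = z"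
  by (metis funpow_mod_eq mod_mult_self1_is_0 funpow_0 mult.commute)

lemma periodic_pred:
  assumes "(F^^p) z = z" "p \<ge> 1" shows "(F^^(p - 1)) (F z) = z"
proof -
  have "(F^^(p - 1)) (F z) = (F^^(Suc (p - 1))) z" by (simp add: funpow_Suc_right del: funpow.simps)
  then show ?thesis using assms by simp
qed

lemma main_finite:
  assumes tp: "totally_periodic F Om"
    and comp: "\<And>a. a \<in> Om \<Longrightarrow> connected_component_of_set (subtopology T Om) a = {a}"
  shows "finite Om"
proof (rule ccontr)
  assume infOm: "infinite Om"
  define TT where "TT = subtopology T Om"
  have tsTT: "topspace TT = Om" unfolding TT_def using Om_sub by (simp add: Int_absorb1)
  have cTT: "compact_space TT" unfolding TT_def using Om_compact compact_space_subtopology by blast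
  have hTT: "Hausdorff_space TT" unfolding TT_def using haus Hausdorff_space_subtopology by blast
  have per: "\<And>z. z \<in> Om \<Longrightarrow> \<exists>p\<ge>1. (F^^p) z = z" using tp unfolding totally_periodic_def by blast
  define Fm where "Fm m = {z \<in> topspace TT. (F^^m) z = id z}" for m
  have cFm: "closedin TT (Fm m)" for m
  proof -
    have "continuous_map TT T (F^^m)" unfolding TT_def
      using cont_pow continuous_map_from_subtopology by blast
    moreover have "continuous_map TT T id" unfolding TT_def
      using continuous_map_from_subtopology continuous_map_id by blast
    ultimately show ?thesis unfolding Fm_def using closedin_continuous_maps_eq haus by blast
  qed
  have UFm: "\<Union>(Fm ` {1..}) = Om"
  proof
    show "\<Union>(Fm ` {1..}) \<subseteq> Om" unfolding Fm_def using tsTT by blast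
    show "Om \<subseteq> \<Union>(Fm ` {1..})"
    proof
      fix z assume "z \<in> Om"
      then obtain p where "p \<ge> 1" "(F^^p) z = z" using per by blast
      then have "z \<in> Fm p" unfolding Fm_def using \<open>z \<in> Om\<close> tsTT by simp
      then show "z \<in> \<Union>(Fm ` {1..})" using \<open>p \<ge> 1\<close> by blast
    qed
  qed
  have lr: "locally_compact_space TT \<or> False"
    using cTT compact_imp_locally_compact_space by blast
  have rg: "regular_space TT" using cTT hTT compact_Hausdorff_imp_regular_space by blast
  have "\<exists>m\<in>{1..}. TT interior_of (Fm m) \<noteq> {}"
  proof (rule ccontr)
    assume nb: "\<not> ?thesis"
    have "TT interior_of \<Union>(Fm ` {1..}) = {}"
    proof (rule Baire_category_alt)
      show "completely_metrizable_space TT \<or> locally_compact_space TT \<and> regular_space TT"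
        using lr rg by blast
      show "countable (Fm ` {1..})" by simp
      show "\<And>S. S \<in> Fm ` {1..} \<Longrightarrow> closedin TT S \<and> TT interior_of S = {}"
        using cFm nb by blast
    qed
    moreover have "TT interior_of Om = Om" using interior_of_topspace[of TT] tsTT by simp
    ultimately have "Om = {}" using UFm by simp
    then show False using infOm by simp
  qed
  then obtain m where m1: "m \<ge> 1" and Wne: "TT interior_of (Fm m) \<noteq> {}" by auto
  define W where "W = TT interior_of (Fm m)"
  have oW: "openin TT W" unfolding W_def by (rule openin_interior_of)
  have WF: "W \<subseteq> Fm m" unfolding W_def by (rule interior_of_subset)
  obtain a where aW: "a \<in> W" using Wne W_def by blast
  have aOm: "a \<in> Om" using aW WF tsTT unfolding Fm_def by auto
  have injF: "inj_on F Om"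
  proof (rule inj_onI)
    fix u v assume uv: "u \<in> Om" "v \<in> Om" "F u = F v"
    obtain p where p: "p \<ge> 1" "(F^^p) u = u" using per uv by blast
    obtain q where q: "q \<ge> 1" "(F^^q) v = v" using per uv by blast
    have pu: "(F^^(p*q)) u = u" using periodic_mult p by blast
    have qv: "(F^^(p*q)) v = v" using periodic_mult[OF q(2), of p] by (simp add: mult.commute)
    have "p*q \<ge> 1" using p q by simp
    then show "u = v" using periodic_pred[OF pu] periodic_pred[OF qv] uv(3) by metis
  qed
  have FOm: "F ` Om = Om"
  proof
    show "F ` Om \<subseteq> Om" using Om_inv by blast
    show "Om \<subseteq> F ` Om"
    proof
      fix z assume z: "z \<in> Om"
      obtain p where p: "p \<ge> 1" "(F^^p) z = z" using per z by blast
      have "z = F ((F^^(p-1)) z)"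
        using p by (metis funpow_Suc_right o_apply periodic_pred funpow_swap1)
      then show "z \<in> F ` Om" using Om_inv_pow z by blast
    qed
  qed
  have FjOm: "(F^^j) ` Om = Om" for j
  proof (induction j)
    case (Suc j)
    have "(F^^Suc j) ` Om = F ` ((F^^j) ` Om)" by (simp add: image_comp)
    then show ?case using Suc FOm by simp
  qed simp
  have injFj: "inj_on (F^^j) Om" for j
  proof (induction j)
    case 0 then show ?case by simp
  next
    case (Suc j)
    have "inj_on (F \<circ> (F^^j)) Om" using Suc injF FjOm by (simp add: comp_inj_on)
    then show ?case by (simp add: o_def)
  qed
  obtain p where p: "p \<ge> 1" "(F^^p) a = a" using per aOm by blast
  define Oa where "Oa = (\<lambda>j. (F^^j) a) ` {..<p}"
  have orbOa: "(F^^j) a \<in> Oa" for j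
  proof -
    have "(F^^j) a = (F^^(j mod p)) a" using funpow_mod_eq[OF p(2)] by simp
    moreover have "j mod p < p" using p(1) by simp
    ultimately show ?thesis unfolding Oa_def by blast
  qed
  have "finite Oa" unfolding Oa_def by simp
  then have "\<not> Om \<subseteq> Oa" using infOm finite_subset by blast
  then obtain b where bOm: "b \<in> Om" and bOa: "b \<notin> Oa" by blast
  define Q where "Q = (\<Union>j<m. {z \<in> Om. (F^^j) z = b})"
  have fQ: "finite Q"
  proof -
    have "{z \<in> Om. (F^^j) z = b} \<subseteq> {inv_into Om (F^^j) b}" for j
      using injFj[of j] inv_into_f_f by fastforce
    then have "finite {z \<in> Om. (F^^j) z = b}" for j by (rule finite_subset) simp
    then show ?thesis unfolding Q_def by blast
  qed
  have aQ: "a \<notin> Q" unfolding Q_def using orbOa bOa by blast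
  have QTT: "closedin TT Q" using closedin_Hausdorff_finite[OF hTT _ fQ] tsTT unfolding Q_def by blast
  define W' where "W' = W - Q"
  have oW': "openin TT W'" unfolding W'_def using oW QTT by blast
  have aW': "a \<in> W'" unfolding W'_def using aW aQ by blast
  have compa: "{a} \<in> connected_components_of TT"
    using comp[OF aOm] connected_component_in_connected_components_of[of TT a] aOm tsTT
    unfolding TT_def by auto
  obtain U V where UV: "openin TT U" "openin TT V" "disjnt U V" "U \<union> V = topspace TT" "{a} \<subseteq> U" "U \<subseteq> W'"
    using wilder_locally_compact_component_thm[OF compact_imp_locally_compact_space[OF cTT] hTT compa _ oW']
      aW' aOm tsTT by (auto simp: compactin_sing)
  have UOm: "U \<subseteq> Om" "V \<subseteq> Om" using UV tsTT by auto
  have cU: "closedin T U"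
  proof -
    have "topspace TT - U = V" using UV(3,4) UV(2) openin_subset unfolding disjnt_def by blast
    then have "closedin TT U" using UV(1,2) openin_subset unfolding closedin_def by metis
    then show ?thesis using closedin_trans_full Om_closed unfolding TT_def by blast
  qed
  have cV: "closedin T V"
  proof -
    have "topspace TT - V = U" using UV(3,4) UV(1) openin_subset unfolding disjnt_def by blast
    then have "closedin TT V" using UV(1,2) openin_subset unfolding closedin_def by metis
    then show ?thesis using closedin_trans_full Om_closed unfolding TT_def by blast
  qed
  have UfixF: "(F^^m) x = x" if "x \<in> U" for x using that UV(6) WF unfolding W'_def Fm_def by auto
  define Ast where "Ast = (\<Union>j<m. (F^^j) ` U)"
  define B where "B = Om \<inter> (\<Inter>j<m. (F^^j) ` V)"
  have cAst: "closedin T Ast" unfolding Ast_def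
  proof (rule closedin_Union)
    show "finite ((\<lambda>j. (F^^j) ` U) ` {..<m})" by simp
    show "\<And>S. S \<in> (\<lambda>j. (F^^j) ` U) ` {..<m} \<Longrightarrow> closedin T S"
      using compactin_imp_closedin[OF haus image_compactin[OF closedin_compact_space[OF cpt cU] cont_pow]]
      by blast
  qed
  have cB: "closedin T B" unfolding B_def
  proof (rule closedin_Int[OF Om_closed], rule closedin_Inter)
    show "(\<lambda>j. (F^^j) ` V) ` {..<m} \<noteq> {}" using m1 by (auto simp: lessThan_empty_iff)
    show "\<And>S. S \<in> (\<lambda>j. (F^^j) ` V) ` {..<m} \<Longrightarrow> closedin T S"
      using compactin_imp_closedin[OF haus image_compactin[OF closedin_compact_space[OF cpt cV] cont_pow]]
      by blast
  qed
  have AstOm: "Ast \<subseteq> Om" unfolding Ast_def using UOm Om_inv_pow by blast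
  have VeqOm: "V = Om - U" using UV tsTT unfolding disjnt_def by blast
  have imgV: "(F^^j) ` V = Om - (F^^j) ` U" for j
    using VeqOm inj_on_image_set_diff[OF injFj[of j] _ UOm(1)] FjOm[of j] by simp
  have Bdef: "B = Om - Ast" unfolding B_def Ast_def imgV using m1 by auto
  have FAst: "F ` Ast \<subseteq> Ast"
  proof
    fix w assume "w \<in> F ` Ast"
    then obtain j x where jx: "j < m" "x \<in> U" "w = F ((F^^j) x)" unfolding Ast_def by blast
    show "w \<in> Ast"
    proof (cases "Suc j < m")
      case True
      have "w = (F^^Suc j) x" using jx by simp
      then show ?thesis using jx True unfolding Ast_def by blast
    next
      case False
      then have "Suc j = m" using jx by simp
      then have "w = x" using jx UfixF[of x] by (metis funpow.simps(2) o_apply)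
      then show ?thesis using jx m1 unfolding Ast_def by (auto intro!: bexI[of _ 0])
    qed
  qed
  have FkAst: "(F^^k) ` Ast \<subseteq> Ast" for k
    by (induction k) (use FAst in \<open>auto simp: image_subset_iff\<close>)
  have FB: "F ` B \<subseteq> B"
  proof
    fix w assume "w \<in> F ` B"
    then obtain z where z: "z \<in> B" "w = F z" by blast
    then have zOm: "z \<in> Om" "z \<notin> Ast" using Bdef by auto
    obtain q where q: "q \<ge> 1" "(F^^q) z = z" using per zOm by blast
    have "F z \<notin> Ast"
    proof
      assume "F z \<in> Ast"
      then have "(F^^(q-1)) (F z) \<in> Ast" using FkAst by blast
      then show False using periodic_pred[OF q(2) q(1)] zOm by simp
    qed
    then show "w \<in> B" using z Om_inv zOm Bdef by auto
  qed
  have aAst: "a \<in> Ast" unfolding Ast_def using m1 UV(5) by (auto intro!: bexI[of _ 0])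
  have bB: "b \<in> B"
  proof -
    have "b \<notin> Ast"
    proof
      assume "b \<in> Ast"
      then obtain j x where "j < m" "x \<in> U" "b = (F^^j) x" unfolding Ast_def by blast
      then have "x \<in> Q" unfolding Q_def using UOm by blast
      then show False using \<open>x \<in> U\<close> UV(6) unfolding W'_def by blast
    qed
    then show ?thesis using bOm Bdef by blast
  qed
  show False
    using nosplit[OF cAst cB _ _ aAst bB FAst FB] AstOm Bdef by blast
qed

end

lemma prod_map_pow: "i < n \<Longrightarrow> (prod_map n f ^^ k) x i = (f i ^^ k) (x i)"
  by (induction k) (simp_all add: prod_map_def)

theorem proposition1p7:
  fixes n :: nat and X :: "nat \<Rightarrow> 'a::metric_space set" and f :: "nat \<Rightarrow> 'a \<Rightarrow> 'a"
    and y :: "nat \<Rightarrow> 'a"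
  assumes "\<And>i. i < n \<Longrightarrow> completely_regular_continuum (X i)"
    and "\<And>i. i < n \<Longrightarrow> continuous_on (X i) (f i)"
    and "\<And>i. i < n \<Longrightarrow> f i ` X i \<subseteq> X i"
    and "y \<in> PiE {..<n} X"
    and "totally_periodic (prod_map n f)
           (omega_limit (product_topology (\<lambda>i. top_of_set (X i)) {..<n}) (prod_map n f) y)"
  shows "finite (omega_limit (product_topology (\<lambda>i. top_of_set (X i)) {..<n}) (prod_map n f) y)"
proof -
  note crc = assms(1) and cf = assms(2) and fX = assms(3) and yS = assms(4) and tp0 = assms(5)
  define P where "P = product_topology (\<lambda>i. top_of_set (X i)) {..<n}"
  define F where "F = prod_map n f"
  have tsP: "topspace P = PiE {..<n} X" by (simp add: P_def)
  have FS: "F x \<in> PiE {..<n} X" if "x \<in> PiE {..<n} X" for x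
    using that fX unfolding F_def prod_map_def by (auto simp: PiE_iff)
  have orbS: "(F^^k) y \<in> PiE {..<n} X" for k
    by (induction k) (simp_all add: yS FS)
  have Fk: "F x i = f i (x i)" if "i < n" for x i using that by (simp add: F_def prod_map_def)
  have contF: "continuous_map P P F"
    unfolding P_def continuous_map_componentwise
  proof (intro conjI ballI)
    show "F ` topspace (product_topology (\<lambda>i. top_of_set (X i)) {..<n}) \<subseteq> extensional {..<n}"
      by (auto simp: F_def prod_map_def)
    fix k assume k: "k \<in> {..<n}"
    have c1: "continuous_map (top_of_set (X k)) (top_of_set (X k)) (f k)"
      using cf fX k by (simp add: continuous_map_subtopology_eu image_subset_iff_funcset)
    have "continuous_map (product_topology (\<lambda>i. top_of_set (X i)) {..<n}) (top_of_set (X k)) (f k \<circ> (\<lambda>x. x k))"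
      by (rule continuous_map_compose[OF continuous_map_product_projection[OF k, of "\<lambda>i. top_of_set (X i)"] c1])
    moreover have "(f k \<circ> (\<lambda>x. x k)) = (\<lambda>x. F x k)" using Fk k by auto
    ultimately show "continuous_map (product_topology (\<lambda>i. top_of_set (X i)) {..<n}) (top_of_set (X k)) (\<lambda>x. F x k)"
      by simp
  qed
  have cX: "compact (X i)" "connected (X i)" if "i < n" for i
    using crc[OF that] unfolding completely_regular_continuum_def continuum_def by auto
  have cpt: "compact_space P" unfolding P_def
    using cX by (auto simp: compact_space_product_topology intro!: compact_space_subtopology)
  have haus: "Hausdorff_space P" unfolding P_def
    by (simp add: Hausdorff_space_product_topology Hausdorff_space_subtopology Hausdorff_space_euclidean)
  have freq: "z \<in> omega_limit P F y"
    if z: "z \<in> topspace P" and H: "\<And>U N. openin P U \<Longrightarrow> z \<in> U \<Longrightarrow> \<exists>k\<ge>N. (F^^k) y \<in> U" for z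
  proof -
    define box where "box m = PiE {..<n} (\<lambda>i. X i \<inter> ball (z i) (1 / Suc m))" for m :: nat
    have ob: "openin P (box m)" for m
      unfolding P_def box_def by (subst openin_PiE_gen) (auto intro: openin_open_Int)
    have zb: "z \<in> box m" for m using z tsP unfolding box_def by (auto simp: PiE_iff)
    have "\<forall>m. \<exists>k. k \<ge> m \<and> (F^^k) y \<in> box m" using H ob zb by blast
    then obtain r where r: "\<And>m. r m \<ge> m \<and> (F^^r m) y \<in> box m" by metis
    have fl: "filterlim r at_top sequentially"
      unfolding filterlim_at_top eventually_sequentially using r le_trans by blast
    have lim: "limitin P (\<lambda>k. (F ^^ r k) y) z sequentially"
      unfolding P_def limitin_componentwise
    proof (intro conjI ballI)
      show "z \<in> extensional {..<n}" using z tsP by (auto simp: PiE_iff)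
      show "\<forall>\<^sub>F a in sequentially. (F ^^ r a) y \<in> topspace (product_topology (\<lambda>i. top_of_set (X i)) {..<n})"
        using orbS by simp
      fix i assume i: "i \<in> {..<n}"
      have zi: "z i \<in> X i" using z tsP i by (auto simp: PiE_iff)
      have "((\<lambda>c. (F ^^ r c) y i) \<longlongrightarrow> z i) sequentially"
      proof (rule tendstoI)
        fix e :: real assume e: "e > 0"
        obtain N where N: "inverse (real (Suc N)) < e" using reals_Archimedean[OF e] by blast
        show "\<forall>\<^sub>F c in sequentially. dist ((F ^^ r c) y i) (z i) < e"
          unfolding eventually_sequentially
        proof (intro exI allI impI)
          fix c assume c: "c \<ge> N"
          have "(F^^r c) y i \<in> ball (z i) (1 / Suc c)" using r[of c] i unfolding box_def by (auto simp: PiE_iff)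
          then have "dist ((F ^^ r c) y i) (z i) < 1 / Suc c" by (simp add: dist_commute)
          also have "\<dots> \<le> inverse (real (Suc N))" using c by (simp add: field_simps)
          finally show "dist ((F ^^ r c) y i) (z i) < e" using N by linarith
        qed
      qed
      then show "limitin (top_of_set (X i)) (\<lambda>c. (F ^^ r c) y i) (z i) sequentially"
        using zi orbS i by (auto simp: limitin_subtopology limitin_canonical_iff PiE_iff)
    qed
    show ?thesis unfolding omega_limit_def using fl lim by blast
  qed
  interpret O: omdyn P F y
    using contF cpt haus yS tsP freq by unfold_locales auto
  have tp: "totally_periodic F (omega_limit P F y)" using tp0 unfolding P_def F_def by simp
  have comp: "connected_component_of_set (subtopology P (omega_limit P F y)) a = {a}"
    if aOm: "a \<in> omega_limit P F y" for a
  proof -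
    define Om where "Om = omega_limit P F y"
    define TT where "TT = subtopology P Om"
    define C where "C = connected_component_of_set TT a"
    have tsTT: "topspace TT = Om" unfolding TT_def Om_def using O.Om_sub by (simp add: Int_absorb1)
    have aC: "a \<in> C" unfolding C_def using aOm tsTT Om_def connected_component_of_refl by fastforce
    have COm: "C \<subseteq> Om" unfolding C_def using connected_component_of_subset_topspace tsTT by metis
    have OmS: "Om \<subseteq> PiE {..<n} X" using O.Om_sub tsP Om_def by simp
    have "C \<subseteq> {a}"
    proof
      fix c assume cC: "c \<in> C"
      show "c \<in> {a}"
      proof (rule ccontr)
        assume ca: "c \<notin> {a}"
        have "\<exists>i<n. a i \<noteq> c i"
        proof (rule ccontr)
          assume "\<not> ?thesis"
          moreover have "a \<in> extensional {..<n}" "c \<in> extensional {..<n}"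
            using OmS aC cC COm by (auto simp: PiE_iff)
          ultimately have "a = c" using extensionalityI[of a "{..<n}" c] by auto
          then show False using ca by simp
        qed
        then obtain i where i: "i < n" "a i \<noteq> c i" by blast
        have pr: "continuous_map TT (top_of_set (X i)) (\<lambda>x. x i)"
          unfolding TT_def P_def
          by (rule continuous_map_from_subtopology[OF continuous_map_product_projection]) (use i in simp)
        have conC: "connectedin TT C" unfolding C_def by (rule connectedin_connected_component_of)
        have cptTT: "compact_space TT" unfolding TT_def Om_def
          by (rule compact_space_subtopology[OF O.Om_compact])
        have cptC: "compactin TT C" unfolding C_def
          by (rule closedin_compact_space[OF cptTT closedin_connected_component_of])
        define D where "D = (\<lambda>x. x i) ` C"
        have conD: "connectedin (top_of_set (X i)) D" unfolding D_def
          by (rule connectedin_continuous_map_image[OF pr conC])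
        have cptD: "compactin (top_of_set (X i)) D" unfolding D_def
          by (rule image_compactin[OF cptC pr])
        have DX: "D \<subseteq> X i" "connected D" "compact D"
          using conD cptD by (auto simp: connectedin_subtopology connectedin_iff_connected compactin_subtopology)
        have aD: "a i \<in> D" "c i \<in> D" unfolding D_def using aC cC by auto
        have "continuum D" unfolding continuum_def using DX aD by blast
        then have "(top_of_set (X i)) interior_of D \<noteq> {}"
          using crc[OF i(1)] DX aD i(2) unfolding completely_regular_continuum_def by blast
        then obtain w where wI: "w \<in> (top_of_set (X i)) interior_of D" by blast
        define O' where "O' = (top_of_set (X i)) interior_of D"
        have oO: "openin (top_of_set (X i)) O'" unfolding O'_def by (rule openin_interior_of)
        have OD: "O' \<subseteq> D" unfolding O'_def by (rule interior_of_subset)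
        have wO: "w \<in> O'" using wI O'_def by simp
        then obtain z where z: "z \<in> C" "w = z i" using OD unfolding D_def by blast
        define Cyl where "Cyl = {x \<in> topspace P. x i \<in> O'}"
        have "continuous_map P (top_of_set (X i)) (\<lambda>x. x i)"
          unfolding P_def by (rule continuous_map_product_projection) (use i in simp)
        then have oCyl: "openin P Cyl" unfolding Cyl_def
          using openin_continuous_map_preimage[OF _ oO] by blast
        have zCyl: "z \<in> Cyl" unfolding Cyl_def using z wO COm O.Om_sub Om_def by auto
        obtain k where k: "(F^^k) y \<in> Cyl" using O.Om_freq[OF _ oCyl zCyl, of 0] z COm Om_def by auto
        then have "(F^^k) y i \<in> D" using OD unfolding Cyl_def by auto
        then obtain z' where z': "z' \<in> C" "(F^^k) y i = z' i" unfolding D_def by blast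
        obtain q where q: "q \<ge> 1" "(F^^q) z' = z'"
          using tp z' COm unfolding totally_periodic_def Om_def by blast
        define u where "u = z' i"
        have uq: "(f i ^^ q) u = u" using q(2) prod_map_pow[OF i(1), where f=f and k=q and x="z'"] unfolding u_def F_def
          by simp
        have uk: "(f i ^^ k) (y i) = u" using z'(2) prod_map_pow[OF i(1), where f=f and k=k and x=y] unfolding u_def F_def
          by simp
        define R where "R = (\<lambda>j. (f i ^^ j) (y i)) ` {..<k+q}"
        have allR: "(f i ^^ j) (y i) \<in> R" for j
        proof (cases "j < k + q")
          case True then show ?thesis unfolding R_def by blast
        next
          case False
          then have jk: "j = (j - k) + k" by simp
          have "(f i ^^ j) (y i) = (f i ^^ (j - k)) u"
            using uk by (subst jk) (simp add: funpow_add)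
          also have "\<dots> = (f i ^^ ((j - k) mod q)) u" using funpow_mod_eq[OF uq] by simp
          also have "\<dots> = (f i ^^ ((j - k) mod q + k)) (y i)" using uk by (simp add: funpow_add)
          finally have eq: "(f i ^^ j) (y i) = (f i ^^ ((j - k) mod q + k)) (y i)" .
          have "(j - k) mod q + k < k + q" using q(1) by simp
          then show ?thesis unfolding R_def eq by blast
        qed
        have DR: "D \<subseteq> R"
        proof
          fix v assume "v \<in> D"
          then obtain x where x: "x \<in> C" "v = x i" unfolding D_def by blast
          then have "x \<in> omega_limit P F y" using COm Om_def by blast
          then obtain r where r: "limitin P (\<lambda>k. (F ^^ r k) y) x sequentially"
            unfolding omega_limit_def by blast
          then have "limitin (top_of_set (X i)) (\<lambda>c. (F ^^ r c) y i) (x i) sequentially"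
            unfolding P_def limitin_componentwise using i by auto
          then have lim: "((\<lambda>c. (F ^^ r c) y i) \<longlongrightarrow> x i) sequentially"
            by (simp add: limitin_subtopology limitin_canonical_iff)
          have ev: "\<forall>\<^sub>F c in sequentially. (F ^^ r c) y i \<in> R"
            using allR prod_map_pow[OF i(1), where f=f] unfolding F_def by simp
          have "x i \<in> R"
            by (rule Lim_in_closed_set[OF finite_imp_closed ev trivial_limit_sequentially lim]) (simp add: R_def)
          then show "v \<in> R" using x by simp
        qed
        have "finite D" using DR by (rule finite_subset) (simp add: R_def)
        then have "D = {} \<or> (\<exists>b. D = {b})" using connected_finite_iff_sing DX(2) by blast
        then show False using aD i(2) by auto
      qed
    qed
    then show ?thesis using aC unfolding C_def TT_def Om_def by blast
  qed
  have "finite (omega_limit P F y)" by (rule O.main_finite[OF tp comp])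
  then show ?thesis unfolding P_def F_def by simp
qed

end
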